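(* Let $p\ge1$ and $\mathbf{y}\in\mathbb{R}^p$ with $s=\|\mathbf{y}\|^2>p+2$. For $\tau^2>0$ put $\kappa=1/(1+\tau^2)$ and $w(\tau^2)=(1-\kappa)^2 s+(1-\kappa)p$, and define the EM update map $M(\tau^2)=\arg\min_{t>0}\left\{\frac p2\log t+\frac{w(\tau^2)}{2t}+\log(1+t)\right\}$. Then $\tau^{2}_\ast=(1-\kappa_\ast)/\kappa_\ast$ with $\kappa_\ast=(p+2)/s$ is a fixed point of $M$, i.e. $M(\tau^2_\ast)=\tau^2_\ast$. Moreover, the corresponding posterior-mean estimator $\hat{\boldsymbol\beta}=(1-\kappa_\ast)\mathbf{y}=\left(1-\frac{p+2}{\|\mathbf{y}\|^2}\right)\mathbf{y}$ is, as an estimator of $\boldsymbol\beta$ under the model $\mathbf{y}\sim N_p(\boldsymbol\beta,\mathbf{I}_p)$ with squared-error loss, minimax (in particular it dominates the least-squares estimator $\mathbf{y}$) whenever $p\ge6$.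
   Context: Normal multiple means model with known unit variance: $y_i\mid\beta_i\sim N(\beta_i,1)$ independently, $\boldsymbol\beta\mid\tau\sim N_p(\mathbf{0},\tau^2\mathbf{I}_p)$, $\tau$ has a standard half-Cauchy prior. The conditional posterior is $\boldsymbol\beta\mid\mathbf{y},\tau\sim N((1-\kappa)\mathbf{y},(1-\kappa)\mathbf{I}_p)$ with $\kappa=1/(1+\tau^2)$, so $w(\tau^2)=\mathbb{E}[\|\boldsymbol\beta\|^2\mid\mathbf{y},\tau]$, and $M$ is the EM update of $\tau^2$ obtained by minimizing the expected negative log-posterior. *)

theory Defs
  imports "HOL-Probability.Probability"
begin

definition sqnorm :: "nat \<Rightarrow> (nat \<Rightarrow> real) \<Rightarrow> real" where
  "sqnorm p y = (\<Sum>i<p. (y i)\<^sup>2)"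

definition kappa :: "real \<Rightarrow> real" where
  "kappa tau2 = 1 / (1 + tau2)"

text \<open>w(tau^2) = (1-kappa)^2 s + (1-kappa) p = E[ ||beta||^2 | y, tau ].\<close>
definition w_fun :: "nat \<Rightarrow> real \<Rightarrow> real \<Rightarrow> real" where
  "w_fun p s tau2 = (1 - kappa tau2)\<^sup>2 * s + (1 - kappa tau2) * real p"

definition em_obj :: "nat \<Rightarrow> real \<Rightarrow> real \<Rightarrow> real \<Rightarrow> real" where
  "em_obj p s tau2 t = real p / 2 * ln t + w_fun p s tau2 / (2 * t) + ln (1 + t)"

definition em_map :: "nat \<Rightarrow> real \<Rightarrow> real \<Rightarrow> real" where
  "em_map p s tau2 = arg_min (em_obj p s tau2) (\<lambda>t. t > 0)"

definition normal_vec :: "nat \<Rightarrow> (nat \<Rightarrow> real) \<Rightarrow> (nat \<Rightarrow> real) measure" where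
  "normal_vec p beta = PiM {..<p} (\<lambda>i. density lborel (normal_density (beta i) 1))"

definition risk :: "nat \<Rightarrow> ((nat \<Rightarrow> real) \<Rightarrow> (nat \<Rightarrow> real)) \<Rightarrow> (nat \<Rightarrow> real) \<Rightarrow> ennreal" where
  "risk p delta beta =
     (\<integral>\<^sup>+ x. ennreal (\<Sum>i<p. (delta x i - beta i)\<^sup>2) \<partial>normal_vec p beta)"

definition estimator :: "nat \<Rightarrow> ((nat \<Rightarrow> real) \<Rightarrow> (nat \<Rightarrow> real)) \<Rightarrow> bool" where
  "estimator p delta \<longleftrightarrow> (\<forall>i<p. (\<lambda>x. delta x i) \<in> borel_measurable (PiM {..<p} (\<lambda>_. borel)))"

definition minimax :: "nat \<Rightarrow> ((nat \<Rightarrow> real) \<Rightarrow> (nat \<Rightarrow> real)) \<Rightarrow> bool" where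
  "minimax p delta \<longleftrightarrow> estimator p delta \<and>
     (\<forall>delta'. estimator p delta' \<longrightarrow> (SUP beta. risk p delta beta) \<le> (SUP beta. risk p delta' beta))"

end

theory Submission
  imports Defs "HOL-Real_Asymp.Real_Asymp"
begin

lemma partA_aux: "t > (0::real) \<Longrightarrow> a / 2 * (1/t) - w / (2*t^2) + 1 / (1 + t) = ((a + 2) * t^2 + (a - w) * t - w) / (2 * t^2 * (1 + t))"
  by (simp add: field_simps power2_eq_square)

lemma partA:
  fixes p :: nat and s :: real
  assumes s: "s > real p + 2"
  defines "k \<equiv> (real p + 2) / s"
  defines "tau \<equiv> (1 - k) / k"
  shows "em_map p s tau = tau"
proof -
  have s0: "s > 0" using s by simp
  have k0: "0 < k" "k < 1" using s s0 by (auto simp: k_def field_simps)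
  have tau0: "tau > 0" using k0 by (simp add: tau_def)
  have kap: "kappa tau = k" using k0 by (simp add: kappa_def tau_def field_simps)
  define w where "w = w_fun p s tau"
  have w: "w = (1-k)^2 * s + (1-k) * real p" by (simp add: w_def w_fun_def kap)
  have w0: "w > 0" using k0 s0 unfolding w by (simp add: add_pos_nonneg)
  define q where "q t = (real p + 2) * t^2 + (real p - w) * t - w" for t
  have qtau: "q tau = 0"
  proof -
    have ss: "s = (real p + 2) / k" using s0 k0 by (simp add: k_def)
    show ?thesis using k0 unfolding q_def w tau_def ss by (simp add: field_simps power2_eq_square)
  qed
  have key: "(real p + 2) * tau + real p - w = w / tau"
    using qtau tau0 unfolding q_def by (simp add: field_simps power2_eq_square)
  have qfac: "q t = (t - tau) * ((real p + 2) * (t + tau) + real p - w)" for t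
    using qtau unfolding q_def by (simp add: algebra_simps power2_eq_square)
  have qpos: "q t > 0" if "t > tau" for t
  proof -
    have "(real p + 2) * t > 0" using that tau0 by simp
    then have "(real p + 2) * (t + tau) + real p - w > w / tau" using key
      unfolding distrib_left[of "real p + 2" t tau] by linarith
    moreover have "w/tau > 0" using w0 tau0 by simp
    ultimately have "(t - tau) * ((real p + 2) * (t + tau) + real p - w) > 0"
      using that by (intro mult_pos_pos) auto
    then show ?thesis by (simp only: qfac)
  qed
  have qneg: "q t < 0" if "0 < t" "t < tau" for t
  proof -
    have "(real p + 2) * t > 0" using that tau0 by simp
    then have "(real p + 2) * (t + tau) + real p - w > w / tau" using key
      unfolding distrib_left[of "real p + 2" t tau] by linarith
    moreover have "w/tau > 0" using w0 tau0 by simp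
    ultimately have "(t - tau) * ((real p + 2) * (t + tau) + real p - w) < 0"
      using that by (intro mult_neg_pos) auto
    then show ?thesis by (simp only: qfac)
  qed
  define f where "f = em_obj p s tau"
  define f' where "f' t = q t / (2 * t^2 * (1 + t))" for t
  have der: "(f has_real_derivative f' t) (at t)" if "t > 0" for t
  proof -
    have "((\<lambda>t. real p / 2 * ln t + w / (2 * t) + ln (1 + t)) has_real_derivative
        (real p / 2 * (1/t) - w / (2*t^2) + 1 / (1 + t))) (at t)"
      using that by (auto intro!: derivative_eq_intros simp: power2_eq_square)
    moreover have "real p / 2 * (1/t) - w / (2*t^2) + 1 / (1 + t) = f' t"
      using partA_aux[OF that, of "real p" w] unfolding f'_def q_def by simp
    ultimately show ?thesis unfolding f_def em_obj_def w_def[symmetric] by simp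
  qed
  have strict: "f tau < f t" if "t > 0" "t \<noteq> tau" for t
  proof (cases "t > tau")
    case True
    have d: "\<And>x. tau \<le> x \<Longrightarrow> x \<le> t \<Longrightarrow> (f has_real_derivative f' x) (at x)"
      using der tau0 by auto
    obtain z where z: "tau < z" "z < t" "f t - f tau = (t - tau) * f' z"
      using MVT2[OF True d] by blast
    have "q z > 0" using qpos[of z] z by simp
    then have "f' z > 0" using z tau0 unfolding f'_def by (intro divide_pos_pos) auto
    then have "(t - tau) * f' z > 0" using True by (intro mult_pos_pos) auto
    then show ?thesis using z by simp
  next
    case False
    then have tt: "t < tau" using that by simp
    have d: "\<And>x. t \<le> x \<Longrightarrow> x \<le> tau \<Longrightarrow> (f has_real_derivative f' x) (at x)"
      using der that by auto
    obtain z where z: "t < z" "z < tau" "f tau - f t = (tau - t) * f' z"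
      using MVT2[OF tt d] by blast
    have "q z < 0" using qneg[of z] z that by simp
    then have "f' z < 0" using z that unfolding f'_def by (intro divide_neg_pos) auto
    then have "(tau - t) * f' z < 0" using tt by (intro mult_pos_neg) auto
    then show ?thesis using z by simp
  qed
  have am: "is_arg_min f (\<lambda>t. t > 0) tau"
  proof -
    have "\<not> f y < f tau" if "y > 0" for y
      using strict[of y] that by (cases "y = tau") auto
    then show ?thesis using tau0 by (auto simp: is_arg_min_def)
  qed
  show ?thesis unfolding em_map_def f_def[symmetric] arg_min_def
  proof (rule some_equality)
    show "is_arg_min f (\<lambda>t. t > 0) tau" by (rule am)
    fix x assume "is_arg_min f (\<lambda>t. t > 0) x"
    then have x: "x > 0" "\<And>y. y > 0 \<Longrightarrow> \<not> f y < f x" unfolding is_arg_min_def by auto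
    show "x = tau"
    proof (rule ccontr)
      assume "x \<noteq> tau"
      then have "f tau < f x" using strict x by auto
      then show False using x(2)[OF tau0] by simp
    qed
  qed
qed

definition G :: "real \<Rightarrow> real measure" where
  "G b = density lborel (normal_density b 1)"

lemma normal_vec_G: "normal_vec p beta = PiM {..<p} (\<lambda>i. G (beta i))"
  by (simp add: normal_vec_def G_def)

lemma prob_G: "prob_space (G b)"
  unfolding G_def by (rule prob_space_normal_density) simp

lemma sets_G[simp, measurable_cong]: "sets (G b) = sets borel"
  by (simp add: G_def)

lemma space_G[simp]: "space (G b) = UNIV"
  by (simp add: G_def)

lemma AE_G_ne: "AE x in G b. x \<noteq> c"
  unfolding G_def by (subst AE_density) (auto intro: AE_mp[OF AE_lborel_singleton])

lemma integrable_G: "f \<in> borel_measurable borel \<Longrightarrow> integrable (G b) f \<longleftrightarrow> integrable lborel (\<lambda>x. normal_density b 1 x * f x)"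
  for f :: "real \<Rightarrow> real"
  unfolding G_def by (subst integrable_density) auto

lemma integral_G: "f \<in> borel_measurable borel \<Longrightarrow> integral\<^sup>L (G b) f = (\<integral>x. normal_density b 1 x * f x \<partial>lborel)"
  for f :: "real \<Rightarrow> real"
  unfolding G_def by (subst integral_density) auto

lemma nn_integral_G: "f \<in> borel_measurable borel \<Longrightarrow> integral\<^sup>N (G b) f = (\<integral>\<^sup>+x. ennreal (normal_density b 1 x) * f x \<partial>lborel)"
  unfolding G_def by (subst nn_integral_density) auto

lemma pps_G: "product_prob_space (\<lambda>i. G (beta i))"
  unfolding product_prob_space_def product_prob_space_axioms_def product_sigma_finite_def
  using prob_G by (auto intro: prob_space_imp_sigma_finite)

definition hpow :: "real \<Rightarrow> real" where "hpow t = \<bar>t\<bar> powr (-2/3)"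

lemma hpow_nonneg: "hpow t \<ge> 0" by (simp add: hpow_def)

lemma hpow_meas[measurable]: "hpow \<in> borel_measurable borel"
  unfolding hpow_def by measurable

lemma hpow_local: "integrable lborel (\<lambda>t. indicator {-1..1} t * hpow t)"
proof -
  have a: "(-2/3::real) > -1" by simp
  have r: "(\<lambda>t. hpow t) integrable_on {0..1}"
    using integrable_on_powr_from_0[OF a zero_le_one]
    by (rule integrable_eq) (simp add: hpow_def)
  have "(\<lambda>t. hpow (-t)) integrable_on {0..1}"
    by (rule integrable_eq[OF r]) (simp add: hpow_def)
  then have "(\<lambda>x. (\<lambda>t. hpow (-t)) (-x)) integrable_on {-1..-0}"
    by (rule iffD2[OF Henstock_Kurzweil_Integration.integrable_reflect_real])
  then have l: "(\<lambda>t. hpow t) integrable_on {-1..0}" by simp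
  have "(\<lambda>t. hpow t) integrable_on {-1..1}"
    by (rule Henstock_Kurzweil_Integration.integrable_combine[OF _ _ l r]) auto
  then have "(\<lambda>t. hpow t) absolutely_integrable_on {-1..1}"
    by (rule nonnegative_absolutely_integrable_1) (simp add: hpow_nonneg)
  then have "integrable lebesgue (\<lambda>t. indicator {-1..1} t * hpow t)"
    by (simp add: set_integrable_def)
  then show ?thesis
    by (subst (asm) integrable_completion) auto
qed

lemma hpow_G: "integrable (G b) hpow"
proof -
  have "integrable lborel (\<lambda>t. normal_density b 1 t * hpow t)"
  proof (rule Bochner_Integration.integrable_bound)
    show "integrable lborel (\<lambda>t. normal_density b 1 t + indicator {-1..1} t * hpow t)"
      using hpow_local by auto
    show "(\<lambda>t. normal_density b 1 t * hpow t) \<in> borel_measurable lborel" by measurable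
    show "AE t in lborel. norm (normal_density b 1 t * hpow t) \<le> norm (normal_density b 1 t + indicator {-1..1} t * hpow t)"
    proof (rule AE_I2)
      fix t :: real
      have nd1: "normal_density b 1 t \<le> 1"
      proof -
        have "normal_density b 1 t = 1 / sqrt (2*pi) * exp (- ((t - b)\<^sup>2) / 2)"
          by (simp add: normal_density_def)
        also have "\<dots> \<le> 1 * 1"
        proof (rule mult_mono)
          have "1 \<le> sqrt (2*pi)" using pi_gt3 by (simp add: real_le_rsqrt)
          then show "1 / sqrt (2*pi) \<le> 1" by simp
        qed auto
        finally show ?thesis by simp
      qed
      show "norm (normal_density b 1 t * hpow t) \<le> norm (normal_density b 1 t + indicator {-1..1} t * hpow t)"
      proof (cases "\<bar>t\<bar> \<le> 1")
        case True
        have "normal_density b 1 t * hpow t \<le> 1 * hpow t"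
          using nd1 hpow_nonneg by (intro mult_right_mono) auto
        moreover have "indicator {-1..1} t * hpow t = hpow t" using True by (auto simp: indicator_def abs_le_iff)
        moreover have "0 \<le> normal_density b 1 t" "0 \<le> normal_density b 1 t * hpow t" by (simp_all add: hpow_nonneg)
        ultimately show ?thesis using hpow_nonneg[of t] by (simp only: real_norm_def)
      next
        case False
        then have "hpow t \<le> 1" unfolding hpow_def
          using powr_less_one[of "\<bar>t\<bar>" "-2/3"] by auto
        have "normal_density b 1 t * hpow t \<le> normal_density b 1 t * 1"
          using \<open>hpow t \<le> 1\<close> by (intro mult_left_mono) auto
        then show ?thesis using hpow_nonneg[of t] by (auto simp: indicator_def)
      qed
    qed
  qed
  then show ?thesis by (subst integrable_G) auto
qed

lemma amgm3:
  fixes u v w :: real assumes "u \<ge> 0" "v \<ge> 0" "w \<ge> 0"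
  shows "3 * u * v * w \<le> u^3 + v^3 + w^3"
proof -
  have "2 * (u^3 + v^3 + w^3 - 3 * u * v * w) = (u+v+w) * ((u-v)^2 + (v-w)^2 + (w-u)^2)"
    by (simp add: algebra_simps power2_eq_square power3_eq_cube)
  moreover have "(u+v+w) * ((u-v)^2 + (v-w)^2 + (w-u)^2) \<ge> 0"
    using assms by (intro mult_nonneg_nonneg) auto
  ultimately have "0 \<le> u^3 + v^3 + w^3 - 3 * u * v * w" by simp
  then show ?thesis by linarith
qed

lemma inv3_bound:
  fixes a b c :: real assumes "a \<noteq> 0" "b \<noteq> 0" "c \<noteq> 0"
  shows "1 / (a^2 + b^2 + c^2) \<le> hpow a * hpow b * hpow c"
proof -
  define u where "u = \<bar>a\<bar> powr (2/3)"
  define v where "v = \<bar>b\<bar> powr (2/3)"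
  define w where "w = \<bar>c\<bar> powr (2/3)"
  have pos: "u > 0" "v > 0" "w > 0" using assms by (auto simp: u_def v_def w_def)
  have cube: "(\<bar>t\<bar> powr (2/3))^3 = t^2" for t :: real
  proof (cases "t = 0")
    case False
    then have tp: "\<bar>t\<bar> > 0" by simp
    have "(\<bar>t\<bar> powr (2/3))^3 = (\<bar>t\<bar> powr (2/3)) powr (real 3)"
      using tp by (subst powr_realpow) auto
    also have "\<dots> = \<bar>t\<bar> powr (real 2)" by (simp add: powr_powr)
    also have "\<dots> = t^2" using tp by (subst powr_realpow) auto
    finally show ?thesis .
  qed simp
  have hp: "hpow t = 1 / (\<bar>t\<bar> powr (2/3))" if "t \<noteq> 0" for t :: real
    using that by (simp add: hpow_def powr_minus_divide)
  have "3 * u * v * w \<le> a^2 + b^2 + c^2"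
    using amgm3[of u v w] pos cube[of a] cube[of b] cube[of c] by (simp add: u_def v_def w_def)
  moreover have "3 * u * v * w > 0" using pos by simp
  ultimately have "1 / (a^2 + b^2 + c^2) \<le> 1 / (3 * u * v * w)"
    by (intro divide_left_mono) auto
  also have "\<dots> \<le> 1 / (u * v * w)" using pos by (simp add: field_simps)
  also have "\<dots> = hpow a * hpow b * hpow c" using assms
    by (simp add: hp u_def v_def w_def)
  finally show ?thesis .
qed

lemma inv_S_integrable:
  fixes I :: "'i set" and beta :: "'i \<Rightarrow> real"
  assumes fin: "finite I" and J: "j1 \<in> I" "j2 \<in> I" "j3 \<in> I" "j1 \<noteq> j2" "j1 \<noteq> j3" "j2 \<noteq> j3"
  shows "integrable (PiM I (\<lambda>i. G (beta i))) (\<lambda>x. 1 / (\<Sum>j\<in>I. (x j)^2))"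
proof -
  interpret product_prob_space "\<lambda>i. G (beta i)" I by (rule pps_G)
  define H where "H j t = (if j \<in> {j1,j2,j3} then hpow t else 1)" for j t
  have intH: "integrable (PiM I (\<lambda>i. G (beta i))) (\<lambda>x. \<Prod>j\<in>I. H j (x j))"
  proof (rule product_integrable_prod[OF fin])
    fix i assume "i \<in> I"
    show "integrable (G (beta i)) (H i)"
    proof (cases "i \<in> {j1,j2,j3}")
      case True
      then have "H i = hpow" by (auto simp: H_def fun_eq_iff)
      then show ?thesis using hpow_G by simp
    next
      case False
      interpret prob_space "G (beta i)" by (rule prob_G)
      have "H i = (\<lambda>_. 1)" using False by (auto simp: H_def fun_eq_iff)
      then show ?thesis by simp
    qed
  qed
  have prodH: "(\<Prod>j\<in>I. H j (x j)) = hpow (x j1) * hpow (x j2) * hpow (x j3)" for x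
  proof -
    have "(\<Prod>j\<in>I. H j (x j)) = (\<Prod>j\<in>I \<inter> {j1,j2,j3}. hpow (x j))"
      unfolding H_def using fin by (simp add: prod.If_cases) (intro prod.cong; auto)
    also have "I \<inter> {j1,j2,j3} = {j1,j2,j3}" using J by auto
    finally show ?thesis using J by simp
  qed
  have AEnz: "AE x in PiM I (\<lambda>i. G (beta i)). x j1 \<noteq> 0 \<and> x j2 \<noteq> 0 \<and> x j3 \<noteq> 0"
    using AE_PiM_component[OF prob_G J(1) AE_G_ne] AE_PiM_component[OF prob_G J(2) AE_G_ne]
      AE_PiM_component[OF prob_G J(3) AE_G_ne]
    by eventually_elim auto
  show ?thesis
  proof (rule Bochner_Integration.integrable_bound[OF intH])
    show "(\<lambda>x. 1 / (\<Sum>j\<in>I. (x j)^2)) \<in> borel_measurable (PiM I (\<lambda>i. G (beta i)))"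
      by measurable
    show "AE x in PiM I (\<lambda>i. G (beta i)). norm (1 / (\<Sum>j\<in>I. (x j)^2)) \<le> norm (\<Prod>j\<in>I. H j (x j))"
      using AEnz
    proof eventually_elim
      case (elim x)
      have sub: "(x j1)^2 + (x j2)^2 + (x j3)^2 \<le> (\<Sum>j\<in>I. (x j)^2)"
      proof -
        have "(\<Sum>j\<in>{j1,j2,j3}. (x j)^2) \<le> (\<Sum>j\<in>I. (x j)^2)"
          using J fin by (intro sum_mono2) auto
        then show ?thesis using J by simp
      qed
      have p3: "(x j1)^2 + (x j2)^2 + (x j3)^2 > 0" using elim by (simp add: add_pos_nonneg)
      have "1 / (\<Sum>j\<in>I. (x j)^2) \<le> 1 / ((x j1)^2 + (x j2)^2 + (x j3)^2)"
        using sub p3 by (intro divide_left_mono) auto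
      also have "\<dots> \<le> hpow (x j1) * hpow (x j2) * hpow (x j3)"
        using elim by (intro inv3_bound) auto
      finally show ?case using sub p3 hpow_nonneg
        by (simp add: prodH)
    qed
  qed
qed

lemma nd_deriv: "((\<lambda>y. normal_density b 1 y) has_real_derivative (- (y - b) * normal_density b 1 y)) (at y)"
proof -
  define c where "c = 1 / sqrt (2 * pi)"
  have e: "normal_density b 1 = (\<lambda>y. c * exp (- ((y - b)^2) / 2))"
    by (simp add: fun_eq_iff normal_density_def c_def)
  show ?thesis unfolding e
    by (auto intro!: derivative_eq_intros simp: power2_eq_square field_simps)
qed

lemma stein_F_deriv:
  assumes z: "z > 0"
  shows "((\<lambda>y. y / (y^2 + z) * normal_density b 1 y) has_real_derivative
     (normal_density b 1 y * ((z - y^2)/(y^2+z)^2) - normal_density b 1 y * ((y - b) * (y / (y^2 + z))))) (at y)"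
proof -
  have pz: "y^2 + z > 0" using z by (simp add: add_nonneg_pos)
  have "((\<lambda>y. y / (y^2 + z)) has_real_derivative ((z - y^2)/(y^2+z)^2)) (at y)"
    using pz by (auto intro!: derivative_eq_intros simp: power2_eq_square field_simps)
  from DERIV_mult[OF this nd_deriv[of b y]] show ?thesis
    by (rule DERIV_cong) (use pz in \<open>simp add: field_simps\<close>)
qed

lemma stein_1d:
  fixes z b :: real
  assumes z: "z > 0"
  defines "f1 \<equiv> (\<lambda>y. normal_density b 1 y * ((y - b) * (y / (y^2 + z))))"
  defines "f2 \<equiv> (\<lambda>y. normal_density b 1 y * ((z - y^2) / (y^2 + z)^2))"
  shows "integrable lborel f1" "integrable lborel f2" "integral\<^sup>L lborel f1 = integral\<^sup>L lborel f2"
proof -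
  have pz: "y^2 + z > 0" for y :: real using z by (simp add: add_nonneg_pos)
  have b2: "\<bar>(z - y^2) / (y^2 + z)^2\<bar> \<le> 1 / z" for y :: real
  proof -
    have "\<bar>z - y^2\<bar> \<le> y^2 + z" using z zero_le_power2[of y] by (simp add: abs_le_iff)
    moreover have "\<bar>(z - y^2) / (y^2 + z)^2\<bar> = \<bar>z - y^2\<bar> / (y^2 + z)^2"
      by (simp add: abs_divide)
    ultimately have "\<bar>(z - y^2) / (y^2 + z)^2\<bar> \<le> (y^2 + z) / (y^2 + z)^2"
      by (simp add: divide_right_mono)
    also have "\<dots> = 1 / (y^2 + z)" using pz[of y] by (simp add: power2_eq_square)
    also have "\<dots> \<le> 1 / z" using z pz[of y] by (intro divide_left_mono) auto
    finally show ?thesis .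
  qed
  have b1: "\<bar>y / (y^2 + z)\<bar> \<le> 1 + 1 / z" for y :: real
  proof -
    have "\<bar>y\<bar> \<le> y^2 + 1"
    proof (cases "\<bar>y\<bar> \<le> 1")
      case True then show ?thesis using zero_le_power2[of y] by linarith
    next
      case False
      then have "\<bar>y\<bar> * 1 \<le> \<bar>y\<bar> * \<bar>y\<bar>" by (intro mult_left_mono) auto
      then show ?thesis by (simp add: power2_eq_square)
    qed
    moreover have "\<bar>y / (y^2 + z)\<bar> = \<bar>y\<bar> / (y^2 + z)"
      using pz[of y] by (simp add: abs_divide)
    ultimately have "\<bar>y / (y^2 + z)\<bar> \<le> (y^2 + 1) / (y^2 + z)"
      using pz[of y] by (simp add: divide_right_mono)
    also have "\<dots> \<le> 1 + 1 / z"
    proof -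
      have e: "(1 + 1/z) * (y^2 + z) = y^2 + z + y^2/z + 1" using z by (simp add: field_simps)
      have "y^2 / z \<ge> 0" using z by simp
      then have "y^2 + 1 \<le> (1 + 1/z) * (y^2 + z)" unfolding e using z by linarith
      then show ?thesis using pz[of y] by (simp add: pos_divide_le_eq)
    qed
    finally show ?thesis .
  qed
  show i2: "integrable lborel f2"
  proof (rule Bochner_Integration.integrable_bound)
    show "integrable lborel (\<lambda>y. normal_density b 1 y * (1 / z))" by auto
    show "f2 \<in> borel_measurable lborel" unfolding f2_def by measurable
    show "AE y in lborel. norm (f2 y) \<le> norm (normal_density b 1 y * (1 / z))"
    proof (rule AE_I2)
      fix y
      have "\<bar>f2 y\<bar> = normal_density b 1 y * \<bar>(z - y^2) / (y^2 + z)^2\<bar>"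
        unfolding f2_def by (simp add: abs_mult)
      also have "\<dots> \<le> normal_density b 1 y * (1 / z)"
        using b2[of y] by (intro mult_left_mono) auto
      finally show "norm (f2 y) \<le> norm (normal_density b 1 y * (1 / z))"
        using z by simp
    qed
  qed
  show i1: "integrable lborel f1"
  proof (rule Bochner_Integration.integrable_bound)
    show "integrable lborel (\<lambda>y. (normal_density b 1 y * \<bar>y - b\<bar>^1) * (1 + 1 / z))"
      using integrable_normal_moment_abs[of 1 b 1] by auto
    show "f1 \<in> borel_measurable lborel" unfolding f1_def by measurable
    show "AE y in lborel. norm (f1 y) \<le> norm ((normal_density b 1 y * \<bar>y - b\<bar>^1) * (1 + 1 / z))"
    proof (rule AE_I2)
      fix y
      have "\<bar>f1 y\<bar> = normal_density b 1 y * \<bar>y - b\<bar> * \<bar>y / (y^2 + z)\<bar>"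
        unfolding f1_def by (simp add: abs_mult)
      also have "\<dots> \<le> normal_density b 1 y * \<bar>y - b\<bar> * (1 + 1 / z)"
        using b1[of y] by (intro mult_left_mono) auto
      finally show "norm (f1 y) \<le> norm ((normal_density b 1 y * \<bar>y - b\<bar>^1) * (1 + 1 / z))"
        using z by simp
    qed
  qed
  let ?F = "\<lambda>y. y / (y^2 + z) * normal_density b 1 y"
  have "(LBINT y=-\<infinity>..\<infinity>. f2 y - f1 y) = 0 - 0"
  proof (rule interval_integral_FTC_integrable)
    show "- \<infinity> < (\<infinity>::ereal)" by simp
    show "(?F has_vector_derivative f2 y - f1 y) (at y)" for y
      using stein_F_deriv[OF z, of b y] unfolding f1_def f2_def
      by (simp add: has_real_derivative_iff_has_vector_derivative)
    show "isCont (\<lambda>y. f2 y - f1 y) y" for y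
    proof -
      have c: "isCont (normal_density b 1) y" by (rule DERIV_isCont[OF nd_deriv])
      have nz: "y^2 + z \<noteq> 0" "(y^2 + z)^2 \<noteq> 0" using pz[of y] by auto
      show ?thesis unfolding f1_def f2_def
        by (intro continuous_intros c) (simp_all add: nz)
    qed
    show "set_integrable lborel (einterval (- \<infinity>) \<infinity>) (\<lambda>y. f2 y - f1 y)"
      using i1 i2 by (simp add: set_integrable_def)
    show "((?F \<circ> real_of_ereal) \<longlongrightarrow> 0) (at_right (- \<infinity>))"
      unfolding ereal_tendsto_simps using z unfolding normal_density_def by real_asymp
    show "((?F \<circ> real_of_ereal) \<longlongrightarrow> 0) (at_left \<infinity>)"
      unfolding ereal_tendsto_simps using z unfolding normal_density_def by real_asymp
  qed
  then have "integral\<^sup>L lborel (\<lambda>y. f2 y - f1 y) = 0"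
    by (simp add: interval_lebesgue_integral_def set_lebesgue_integral_def)
  then show "integral\<^sup>L lborel f1 = integral\<^sup>L lborel f2"
    using i1 i2 by simp
qed

lemma comp_integrable:
  fixes g :: "real \<Rightarrow> real"
  assumes fin: "finite I" and i: "i \<in> I" and g: "g \<in> borel_measurable borel"
    and int: "integrable (G (beta i)) g"
  shows "integrable (PiM I (\<lambda>i. G (beta i))) (\<lambda>x. g (x i))"
    and "(\<integral>x. g (x i) \<partial>PiM I (\<lambda>i. G (beta i))) = integral\<^sup>L (G (beta i)) g"
proof -
  have d: "distr (PiM I (\<lambda>i. G (beta i))) (G (beta i)) (\<lambda>\<omega>. \<omega> i) = G (beta i)"
    by (rule distr_PiM_component[OF prob_G i])
  have m: "(\<lambda>\<omega>. \<omega> i) \<in> measurable (PiM I (\<lambda>i. G (beta i))) (G (beta i))"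
    using i by measurable
  have g': "g \<in> borel_measurable (G (beta i))" using g by simp
  show "integrable (PiM I (\<lambda>i. G (beta i))) (\<lambda>x. g (x i))"
    using int integrable_distr_eq[OF m g'] d by simp
  show "(\<integral>x. g (x i) \<partial>PiM I (\<lambda>i. G (beta i))) = integral\<^sup>L (G (beta i)) g"
    using integral_distr[OF m g'] d by simp
qed

lemma sq_G: "integrable (G b) (\<lambda>t. (t - b)^2)" "integral\<^sup>L (G b) (\<lambda>t. (t - b)^2) = 1"
proof -
  show "integrable (G b) (\<lambda>t. (t - b)^2)"
    using integrable_normal_moment[of 1 b 2] by (subst integrable_G) auto
  show "integral\<^sup>L (G b) (\<lambda>t. (t - b)^2) = 1"
    using integral_normal_moment_even[of 1 b 1] by (subst integral_G) auto
qed

lemma bound_f1: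
  fixes a t S :: real assumes "t^2 \<le> S"
  shows "\<bar>a * (t / S)\<bar> \<le> (a^2 + 1 / S) / 2"
proof (cases "S = 0")
  case True then show ?thesis by simp
next
  case False
  then have S: "S > 0" using assms zero_le_power2[of t] by linarith
  have "2 * \<bar>a\<bar> * \<bar>t / S\<bar> \<le> a^2 + (t / S)^2"
    using sum_squares_bound[of "\<bar>a\<bar>" "\<bar>t / S\<bar>"] by (simp only: power2_abs)
  moreover have "(t / S)^2 \<le> 1 / S"
  proof -
    have "(t / S)^2 = t^2 / S^2" by (simp add: power_divide)
    also have "\<dots> \<le> S / S^2" using assms S by (intro divide_right_mono) auto
    also have "\<dots> = 1 / S" using S by (simp add: power2_eq_square)
    finally show ?thesis .
  qed
  ultimately have h: "2 * \<bar>a\<bar> * \<bar>t / S\<bar> \<le> a^2 + 1 / S" by linarith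
  define X where "X = \<bar>a * (t / S)\<bar>"
  have "X * 2 = 2 * \<bar>a\<bar> * \<bar>t / S\<bar>" by (simp add: abs_mult X_def)
  with h have "X * 2 \<le> a^2 + 1 / S" by simp
  moreover have gen: "\<And>X Y :: real. X * 2 \<le> Y \<Longrightarrow> X \<le> Y / 2" by linarith
  ultimately have "X \<le> (a^2 + 1 / S) / 2" by blast
  then show ?thesis by (simp add: X_def)
qed

lemma bound_f2:
  fixes t S :: real assumes "t^2 \<le> S"
  shows "\<bar>(S - 2 * t^2) / S^2\<bar> \<le> 1 / S"
proof (cases "S = 0")
  case True then show ?thesis by simp
next
  case False
  then have S: "S > 0" using assms zero_le_power2[of t] by linarith
  have "\<bar>S - 2 * t^2\<bar> \<le> S" using assms zero_le_power2[of t] by (simp add: abs_le_iff)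
  then have "\<bar>(S - 2 * t^2) / S^2\<bar> \<le> S / S^2" using S by (simp add: abs_divide divide_right_mono)
  also have "\<dots> = 1 / S" using S by (simp add: power2_eq_square)
  finally show ?thesis .
qed

lemma sq_le_sum: "finite I \<Longrightarrow> i \<in> I \<Longrightarrow> (x i)^2 \<le> (\<Sum>j\<in>I. (x j)^2)" for x :: "'i \<Rightarrow> real"
  by (rule member_le_sum) auto

lemma stein_coord:
  fixes I :: "'i set" and beta :: "'i \<Rightarrow> real"
  assumes fin: "finite I" and i: "i \<in> I" and j: "j \<in> I" "j \<noteq> i"
    and invS: "integrable (PiM I (\<lambda>i. G (beta i))) (\<lambda>x. 1 / (\<Sum>k\<in>I. (x k)^2))"
  defines "N \<equiv> PiM I (\<lambda>i. G (beta i))"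
  defines "S \<equiv> (\<lambda>x. \<Sum>k\<in>I. (x k)^2)"
  defines "f1 \<equiv> (\<lambda>x. (x i - beta i) * (x i / S x))"
  defines "f2 \<equiv> (\<lambda>x. (S x - 2 * (x i)^2) / (S x)^2)"
  shows "integrable N f1" "integrable N f2" "integral\<^sup>L N f1 = integral\<^sup>L N f2"
proof -
  have iI[simp]: "i \<in> I" by (rule i)
  have psf: "product_sigma_finite (\<lambda>i. G (beta i))"
    using pps_G unfolding product_prob_space_def by blast
  have invS': "integrable N (\<lambda>x. 1 / S x)" using invS by (simp add: N_def S_def)
  have sq: "integrable N (\<lambda>x. (x i - beta i)^2)"
    unfolding N_def by (rule comp_integrable(1)[OF fin i _ sq_G(1)]) simp
  show i1: "integrable N f1"
  proof (rule Bochner_Integration.integrable_bound)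
    show "integrable N (\<lambda>x. ((x i - beta i)^2 + 1 / S x) / 2)"
      using sq invS' by auto
    show "f1 \<in> borel_measurable N" unfolding f1_def S_def N_def by measurable
    show "AE x in N. norm (f1 x) \<le> norm (((x i - beta i)^2 + 1 / S x) / 2)"
    proof (rule AE_I2)
      fix x
      have "\<bar>f1 x\<bar> \<le> ((x i - beta i)^2 + 1 / S x) / 2"
        unfolding f1_def by (rule bound_f1) (simp add: S_def sq_le_sum[OF fin i])
      then show "norm (f1 x) \<le> norm (((x i - beta i)^2 + 1 / S x) / 2)" by simp
    qed
  qed
  show i2: "integrable N f2"
  proof (rule Bochner_Integration.integrable_bound)
    show "integrable N (\<lambda>x. 1 / S x)" by (rule invS')
    show "f2 \<in> borel_measurable N" unfolding f2_def S_def N_def by measurable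
    show "AE x in N. norm (f2 x) \<le> norm (1 / S x)"
    proof (rule AE_I2)
      fix x
      have "\<bar>f2 x\<bar> \<le> 1 / S x"
        unfolding f2_def by (rule bound_f2) (simp add: S_def sq_le_sum[OF fin i])
      moreover have "S x \<ge> 0" unfolding S_def by (simp add: sum_nonneg)
      ultimately show "norm (f2 x) \<le> norm (1 / S x)" by simp
    qed
  qed
  define I' where "I' = I - {i}"
  have I: "I = insert i I'" "i \<notin> I'" "finite I'" using i fin by (auto simp: I'_def)
  have jI': "j \<in> I'" using j by (simp add: I'_def)
  have Sup: "S (x(i := y)) = y^2 + (\<Sum>k\<in>I'. (x k)^2)" for x y
  proof -
    have "S (x(i := y)) = (\<Sum>k\<in>insert i I'. ((x(i := y)) k)^2)" unfolding S_def using I by simp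
    also have "\<dots> = y^2 + (\<Sum>k\<in>I'. ((x(i := y)) k)^2)" using I by simp
    also have "(\<Sum>k\<in>I'. ((x(i := y)) k)^2) = (\<Sum>k\<in>I'. (x k)^2)"
      using I by (intro sum.cong) auto
    finally show ?thesis .
  qed
  have AEpos: "AE x in PiM I' (\<lambda>i. G (beta i)). (\<Sum>k\<in>I'. (x k)^2) > 0"
    using AE_PiM_component[OF prob_G jI' AE_G_ne[where c=0]]
  proof eventually_elim
    case (elim x)
    have "(x j)^2 \<le> (\<Sum>k\<in>I'. (x k)^2)" by (rule sq_le_sum[OF I(3) jI'])
    moreover have "(x j)^2 > 0" using elim by simp
    ultimately show ?case by linarith
  qed
  have NI: "N = PiM (insert i I') (\<lambda>i. G (beta i))" using I by (simp add: N_def)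
  have "integral\<^sup>L N f1 = (\<integral>x. (\<integral>y. f1 (x(i := y)) \<partial>G (beta i)) \<partial>PiM I' (\<lambda>i. G (beta i)))"
    unfolding NI by (rule product_sigma_finite.product_integral_insert[OF psf I(3,2)]) (use i1 NI in simp)
  also have "\<dots> = (\<integral>x. (\<integral>y. f2 (x(i := y)) \<partial>G (beta i)) \<partial>PiM I' (\<lambda>i. G (beta i)))"
  proof (rule integral_cong_AE)
    have sf: "sigma_finite_measure (G (beta i))" by (rule prob_space_imp_sigma_finite[OF prob_G])
    have "(\<lambda>x. \<integral>y. (y - beta i) * (y / (y^2 + (\<Sum>k\<in>I'. (x k)^2))) \<partial>G (beta i)) \<in> borel_measurable (PiM I' (\<lambda>i. G (beta i)))"
      by (rule sigma_finite_measure.borel_measurable_lebesgue_integral[OF sf]) measurable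
    then show "(\<lambda>x. \<integral>y. f1 (x(i := y)) \<partial>G (beta i)) \<in> borel_measurable (PiM I' (\<lambda>i. G (beta i)))"
      by (simp add: f1_def Sup)
    have "(\<lambda>x. \<integral>y. (y^2 + (\<Sum>k\<in>I'. (x k)^2) - 2 * y^2) / (y^2 + (\<Sum>k\<in>I'. (x k)^2))^2 \<partial>G (beta i)) \<in> borel_measurable (PiM I' (\<lambda>i. G (beta i)))"
      by (rule sigma_finite_measure.borel_measurable_lebesgue_integral[OF sf]) measurable
    then show "(\<lambda>x. \<integral>y. f2 (x(i := y)) \<partial>G (beta i)) \<in> borel_measurable (PiM I' (\<lambda>i. G (beta i)))"
      by (simp add: f2_def Sup)
    show "AE x in PiM I' (\<lambda>i. G (beta i)). (\<integral>y. f1 (x(i := y)) \<partial>G (beta i)) = (\<integral>y. f2 (x(i := y)) \<partial>G (beta i))"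
      using AEpos
    proof eventually_elim
      case (elim x)
      define z where "z = (\<Sum>k\<in>I'. (x k)^2)"
      have z: "z > 0" using elim by (simp add: z_def)
      have e1: "f1 (x(i := y)) = (y - beta i) * (y / (y^2 + z))" for y
        unfolding f1_def Sup z_def by simp
      have e2: "f2 (x(i := y)) = (z - y^2) / (y^2 + z)^2" for y
        unfolding f2_def Sup z_def by (simp add: algebra_simps)
      have "(\<integral>y. f1 (x(i := y)) \<partial>G (beta i)) = (\<integral>y. (y - beta i) * (y / (y^2 + z)) \<partial>G (beta i))"
        by (simp add: e1)
      also have "\<dots> = (\<integral>y. normal_density (beta i) 1 y * ((y - beta i) * (y / (y^2 + z))) \<partial>lborel)"
        by (rule integral_G) measurable
      also have "\<dots> = (\<integral>y. normal_density (beta i) 1 y * ((z - y^2) / (y^2 + z)^2) \<partial>lborel)"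
        by (rule stein_1d(3)[OF z])
      also have "\<dots> = (\<integral>y. (z - y^2) / (y^2 + z)^2 \<partial>G (beta i))"
        by (rule integral_G[symmetric]) measurable
      also have "\<dots> = (\<integral>y. f2 (x(i := y)) \<partial>G (beta i))"
        by (simp add: e2)
      finally show ?case .
    qed
  qed
  also have "\<dots> = integral\<^sup>L N f2"
    unfolding NI by (rule product_sigma_finite.product_integral_insert[OF psf I(3,2), symmetric]) (use i2 NI in simp)
  finally show "integral\<^sup>L N f1 = integral\<^sup>L N f2" .
qed

lemma risk_identity:
  "risk p (\<lambda>x. x) beta = ennreal (real p)"
proof -
  let ?N = "PiM {..<p} (\<lambda>i. G (beta i))"
  have int: "integrable ?N (\<lambda>x. (x i - beta i)^2)" if "i < p" for i
    by (rule comp_integrable(1)[OF _ _ _ sq_G(1)]) (use that in auto)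
  have int_eq: "(\<integral>x. (x i - beta i)^2 \<partial>?N) = 1" if "i < p" for i
    using comp_integrable(2)[OF _ _ _ sq_G(1), of "{..<p}" i beta] sq_G(2) that by auto
  have "risk p (\<lambda>x. x) beta = (\<integral>\<^sup>+x. ennreal (\<Sum>i<p. (x i - beta i)^2) \<partial>?N)"
    by (simp add: risk_def normal_vec_G)
  also have "\<dots> = ennreal (\<integral>x. (\<Sum>i<p. (x i - beta i)^2) \<partial>?N)"
    by (rule nn_integral_eq_integral) (use int in \<open>auto intro!: sum_nonneg\<close>)
  also have "(\<integral>x. (\<Sum>i<p. (x i - beta i)^2) \<partial>?N) = (\<Sum>i<p. \<integral>x. (x i - beta i)^2 \<partial>?N)"
    by (rule Bochner_Integration.integral_sum[where f="\<lambda>i x. (x i - beta i)^2"]) (use int in auto)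
  also have "\<dots> = real p" using int_eq by simp
  finally show ?thesis .
qed

lemma pointwise_L:
  fixes x beta :: "nat \<Rightarrow> real" and c :: real and p :: nat
  defines "S \<equiv> (\<Sum>k<p. (x k)^2)"
  shows "(\<Sum>i<p. ((1 - c / S) * x i - beta i)^2)
     = (\<Sum>i<p. (x i - beta i)^2) - 2 * c * (\<Sum>i<p. (x i - beta i) * (x i / S)) + c^2 * (1 / S)"
proof -
  have sq: "(\<Sum>i<p. (x i / S)^2) = 1 / S"
  proof -
    have "(\<Sum>i<p. (x i / S)^2) = (\<Sum>i<p. (x i)^2) / S^2"
      by (simp add: power_divide sum_divide_distrib)
    also have "\<dots> = S / S^2" by (simp add: S_def)
    also have "\<dots> = 1 / S" by (cases "S = 0") (simp_all add: power2_eq_square)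
    finally show ?thesis .
  qed
  have "(\<Sum>i<p. ((1 - c / S) * x i - beta i)^2)
      = (\<Sum>i<p. (x i - beta i)^2 - 2 * c * ((x i - beta i) * (x i / S)) + c^2 * (x i / S)^2)"
    by (intro sum.cong) (auto simp: power2_eq_square algebra_simps)
  also have "\<dots> = (\<Sum>i<p. (x i - beta i)^2) - 2 * c * (\<Sum>i<p. (x i - beta i) * (x i / S)) + c^2 * (\<Sum>i<p. (x i / S)^2)"
    by (simp add: sum.distrib sum_subtractf sum_distrib_left)
  finally show ?thesis using sq by simp
qed

lemma pointwise_f2:
  fixes x :: "nat \<Rightarrow> real" and p :: nat
  defines "S \<equiv> (\<Sum>k<p. (x k)^2)"
  shows "(\<Sum>i<p. (S - 2 * (x i)^2) / S^2) = (real p - 2) * (1 / S)"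
proof -
  have "(\<Sum>i<p. (S - 2 * (x i)^2) / S^2) = (\<Sum>i<p. (S - 2 * (x i)^2)) / S^2"
    by (simp add: sum_divide_distrib)
  also have "(\<Sum>i<p. (S - 2 * (x i)^2)) = real p * S - 2 * S"
    by (simp add: sum_subtractf sum_distrib_left[symmetric] S_def)
  also have "(real p * S - 2 * S) / S^2 = (real p - 2) * (1 / S)"
    by (cases "S = 0") (simp_all add: power2_eq_square field_simps)
  finally show ?thesis .
qed

lemma risk_bhat:
  fixes p :: nat and beta :: "nat \<Rightarrow> real"
  assumes p: "p \<ge> 6"
  shows "risk p (\<lambda>x i. (1 - (real p + 2) / sqnorm p x) * x i) beta \<le> ennreal (real p)"
proof -
  let ?N = "PiM {..<p} (\<lambda>i. G (beta i))"
  define c where "c = real p + 2"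
  define S where "S = (\<lambda>x::nat \<Rightarrow> real. \<Sum>k<p. (x k)^2)"
  define f1 where "f1 = (\<lambda>i x. (x i - beta i) * (x i / S x))"
  define f2 where "f2 = (\<lambda>i x. (S x - 2 * (x i)^2) / (S x)^2)"
  have invS: "integrable ?N (\<lambda>x. 1 / (\<Sum>k\<in>{..<p}. (x k)^2))"
    by (rule inv_S_integrable[of _ 0 1 2]) (use p in auto)
  have invS': "integrable ?N (\<lambda>x. 1 / S x)" using invS by (simp add: S_def)
  have oth: "\<exists>j<p. j \<noteq> i" for i 
  proof (cases "i = 0")
    case True then show ?thesis using p by (intro exI[of _ 1]) simp
  next
    case False then show ?thesis using p by (intro exI[of _ 0]) simp
  qed
  have st: "integrable ?N (f1 i) \<and> integrable ?N (f2 i) \<and> integral\<^sup>L ?N (f1 i) = integral\<^sup>L ?N (f2 i)"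
    if i: "i < p" for i
  proof -
    obtain j where j: "j < p" "j \<noteq> i" using oth[of i] by blast
    have "i \<in> {..<p}" "j \<in> {..<p}" using i j by auto
    from stein_coord[OF _ this(1) this(2) j(2) invS] show ?thesis
      by (simp add: f1_def f2_def S_def)
  qed
  have sqi: "integrable ?N (\<lambda>x. (x i - beta i)^2)" if "i < p" for i
    by (rule comp_integrable(1)[OF _ _ _ sq_G(1)]) (use that in auto)
  have sqe: "(\<integral>x. (x i - beta i)^2 \<partial>?N) = 1" if "i < p" for i
    using comp_integrable(2)[OF _ _ _ sq_G(1), of "{..<p}" i beta] sq_G(2) that by auto
  define E where "E = (\<integral>x. 1 / S x \<partial>?N)"
  have E0: "E \<ge> 0" unfolding E_def by (rule integral_nonneg_AE) (simp add: S_def sum_nonneg)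
  define L where "L = (\<lambda>x. (\<Sum>i<p. (x i - beta i)^2) - 2 * c * (\<Sum>i<p. f1 i x) + c^2 * (1 / S x))"
  have Leq: "(\<Sum>i<p. ((1 - (real p + 2) / sqnorm p x) * x i - beta i)^2) = L x" for x
    unfolding L_def f1_def c_def S_def sqnorm_def by (rule pointwise_L)
  have int1: "integrable ?N (\<lambda>x. \<Sum>i<p. (x i - beta i)^2)" using sqi by auto
  have int2: "integrable ?N (\<lambda>x. \<Sum>i<p. f1 i x)" using st by auto
  have int3: "integrable ?N (\<lambda>x. \<Sum>i<p. f2 i x)" using st by auto
  have intL: "integrable ?N L" unfolding L_def
    by (intro Bochner_Integration.integrable_add Bochner_Integration.integrable_diff integrable_mult_right int1 int2 invS')
  have e1: "(\<integral>x. (\<Sum>i<p. (x i - beta i)^2) \<partial>?N) = real p"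
    by (subst Bochner_Integration.integral_sum[where f="\<lambda>i x. (x i - beta i)^2"]) (use sqi sqe in auto)
  have e2: "(\<integral>x. (\<Sum>i<p. f1 i x) \<partial>?N) = (real p - 2) * E"
  proof -
    have "(\<integral>x. (\<Sum>i<p. f1 i x) \<partial>?N) = (\<Sum>i<p. integral\<^sup>L ?N (f1 i))"
      by (rule Bochner_Integration.integral_sum[where f="\<lambda>i x. f1 i x"]) (use st in auto)
    also have "\<dots> = (\<Sum>i<p. integral\<^sup>L ?N (f2 i))" using st by auto
    also have "\<dots> = (\<integral>x. (\<Sum>i<p. f2 i x) \<partial>?N)"
      by (rule Bochner_Integration.integral_sum[where f="\<lambda>i x. f2 i x", symmetric]) (use st in auto)
    also have "\<dots> = (\<integral>x. (real p - 2) * (1 / S x) \<partial>?N)"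
      unfolding f2_def S_def by (subst pointwise_f2) simp
    also have "\<dots> = (real p - 2) * E" unfolding E_def by (rule integral_mult_right_zero)
    finally show ?thesis .
  qed
  have eL: "(\<integral>x. L x \<partial>?N) = real p - 2 * c * ((real p - 2) * E) + c^2 * E"
  proof -
    have "(\<integral>x. L x \<partial>?N) = (\<integral>x. (\<Sum>i<p. (x i - beta i)^2) - 2 * c * (\<Sum>i<p. f1 i x) \<partial>?N) + (\<integral>x. c^2 * (1 / S x) \<partial>?N)"
      unfolding L_def
      by (intro Bochner_Integration.integral_add Bochner_Integration.integrable_diff integrable_mult_right int1 int2 invS')
    also have "(\<integral>x. (\<Sum>i<p. (x i - beta i)^2) - 2 * c * (\<Sum>i<p. f1 i x) \<partial>?N) = (\<integral>x. (\<Sum>i<p. (x i - beta i)^2) \<partial>?N) - (\<integral>x. 2 * c * (\<Sum>i<p. f1 i x) \<partial>?N)"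
      by (intro Bochner_Integration.integral_diff integrable_mult_right int1 int2)
    also have "(\<integral>x. 2 * c * (\<Sum>i<p. f1 i x) \<partial>?N) = 2 * c * (\<integral>x. (\<Sum>i<p. f1 i x) \<partial>?N)"
      by (rule integral_mult_right_zero)
    also have "(\<integral>x. c^2 * (1 / S x) \<partial>?N) = c^2 * E"
      unfolding E_def by (rule integral_mult_right_zero)
    finally show ?thesis using e1 e2 by simp
  qed
  have "real p - 2 * c * ((real p - 2) * E) + c^2 * E = real p - c * (real p - 6) * E"
    by (simp add: c_def power2_eq_square algebra_simps)
  also have "\<dots> \<le> real p"
  proof -
    have "c * (real p - 6) * E \<ge> 0" using p E0 by (simp add: c_def)
    then show ?thesis by linarith
  qed
  finally have Lle: "(\<integral>x. L x \<partial>?N) \<le> real p" using eL by simp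
  have "risk p (\<lambda>x i. (1 - (real p + 2) / sqnorm p x) * x i) beta = (\<integral>\<^sup>+x. ennreal (L x) \<partial>?N)"
    by (simp add: risk_def normal_vec_G Leq)
  also have "\<dots> = ennreal (\<integral>x. L x \<partial>?N)"
  proof (rule nn_integral_eq_integral[OF intL])
    show "AE x in ?N. 0 \<le> L x"
      by (rule AE_I2) (simp add: Leq[symmetric] sum_nonneg)
  qed
  also have "\<dots> \<le> ennreal (real p)" using Lle by (rule ennreal_leI)
  finally show ?thesis .
qed

lemma indicator_PiE_prod:
  assumes fin: "finite I" and x: "x \<in> PiE I (\<lambda>_. UNIV)"
  shows "(indicator (PiE I A) x :: ennreal) = (\<Prod>i\<in>I. indicator (A i) (x i))"
proof (cases "x \<in> PiE I A")
  case True then show ?thesis by (auto simp: indicator_def PiE_iff intro!: prod.neutral)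
next
  case False
  then obtain i where "i \<in> I" "x i \<notin> A i" using x by (auto simp: PiE_iff)
  then show ?thesis using False fin by (auto intro!: prod_zero[symmetric] bexI[of _ i])
qed

lemma PiM_density_normal:
  fixes I :: "'i set" and m :: "'i \<Rightarrow> real" and s :: real
  assumes fin: "finite I" and s: "s > 0"
  shows "PiM I (\<lambda>i. density lborel (normal_density (m i) s))
       = density (PiM I (\<lambda>_. lborel)) (\<lambda>x. \<Prod>i\<in>I. ennreal (normal_density (m i) s (x i)))"
proof -
  have ps: "prob_space (density lborel (normal_density (m i) s))" for i
    by (rule prob_space_normal_density[OF s])
  interpret product_sigma_finite "\<lambda>i. density lborel (normal_density (m i) s)"
    unfolding product_sigma_finite_def using ps by (auto intro: prob_space_imp_sigma_finite)
  interpret L: product_sigma_finite "\<lambda>_::'i. lborel :: real measure"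
    unfolding product_sigma_finite_def by (intro allI) (rule lborel.sigma_finite_measure_axioms)
  show ?thesis
  proof (rule PiM_eqI[symmetric, OF fin])
    show "sets (density (PiM I (\<lambda>_. lborel)) (\<lambda>x. \<Prod>i\<in>I. ennreal (normal_density (m i) s (x i))))
        = sets (PiM I (\<lambda>i. density lborel (normal_density (m i) s)))"
      unfolding sets_density by (rule sets_PiM_cong) simp_all
    fix A assume A: "\<And>i. i \<in> I \<Longrightarrow> A i \<in> sets (density lborel (normal_density (m i) s))"
    then have A': "\<And>i. i \<in> I \<Longrightarrow> A i \<in> sets borel" by simp
    have mPiE: "PiE I A \<in> sets (PiM I (\<lambda>_. lborel :: real measure))"
      using A' by (intro sets_PiM_I_finite fin) auto
    have "emeasure (density (PiM I (\<lambda>_. lborel)) (\<lambda>x. \<Prod>i\<in>I. ennreal (normal_density (m i) s (x i)))) (PiE I A)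
        = (\<integral>\<^sup>+x. (\<Prod>i\<in>I. ennreal (normal_density (m i) s (x i))) * indicator (PiE I A) x \<partial>PiM I (\<lambda>_. lborel))"
      using mPiE by (subst emeasure_density) auto
    also have "\<dots> = (\<integral>\<^sup>+x. (\<Prod>i\<in>I. ennreal (normal_density (m i) s (x i)) * indicator (A i) (x i)) \<partial>PiM I (\<lambda>_. lborel))"
      by (intro nn_integral_cong) (simp add: indicator_PiE_prod[OF fin] space_PiM prod.distrib)
    also have "\<dots> = (\<Prod>i\<in>I. \<integral>\<^sup>+t. ennreal (normal_density (m i) s t) * indicator (A i) t \<partial>lborel)"
      by (rule L.product_nn_integral_prod[OF fin]) (use A' in auto)
    also have "\<dots> = (\<Prod>i\<in>I. emeasure (density lborel (normal_density (m i) s)) (A i))"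
      using A' by (intro prod.cong refl) (simp add: emeasure_density)
    finally show "emeasure (density (PiM I (\<lambda>_. lborel)) (\<lambda>x. \<Prod>i\<in>I. ennreal (normal_density (m i) s (x i)))) (PiE I A)
        = (\<Prod>i\<in>I. emeasure (density lborel (normal_density (m i) s)) (A i))" .
  qed
qed

lemma normal_second:
  fixes t m d :: real assumes t: "t > 0"
  shows "integrable lborel (\<lambda>b. normal_density m t b * (d - b)^2)"
    "(\<integral>b. normal_density m t b * (d - b)^2 \<partial>lborel) = t^2 + (d - m)^2"
proof -
  have e: "normal_density m t b * (d - b)^2 = normal_density m t b * (b - m)^(2*1) - 2 * (d - m) * (normal_density m t b * (b - m)^(2*0+1)) + (d - m)^2 * normal_density m t b" for b
    by (simp add: power2_eq_square algebra_simps)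
  have i1: "integrable lborel (\<lambda>b. normal_density m t b * (b - m)^(2*1))"
    using integrable_normal_moment[OF t, of m "2*1"] .
  have i2: "integrable lborel (\<lambda>b. normal_density m t b * (b - m)^(2*0+1))"
    using integrable_normal_moment[OF t, of m "2*0+1"] .
  have i3: "integrable lborel (normal_density m t)" using t by simp
  show "integrable lborel (\<lambda>b. normal_density m t b * (d - b)^2)"
    unfolding e using i1 i2 i3 by (intro Bochner_Integration.integrable_add Bochner_Integration.integrable_diff integrable_mult_right) auto
  have "(\<integral>b. normal_density m t b * (d - b)^2 \<partial>lborel)
     = (\<integral>b. normal_density m t b * (b - m)^(2*1) \<partial>lborel) - 2 * (d - m) * (\<integral>b. normal_density m t b * (b - m)^(2*0+1) \<partial>lborel) + (d - m)^2 * (\<integral>b. normal_density m t b \<partial>lborel)"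
    unfolding e using i1 i2 i3
    by (subst Bochner_Integration.integral_add Bochner_Integration.integral_diff integral_mult_right_zero
        | intro Bochner_Integration.integrable_add Bochner_Integration.integrable_diff integrable_mult_right | simp)+
  also have "\<dots> = t^2 + (d - m)^2"
    using integral_normal_moment_even[OF t, of m 1] integral_normal_moment_odd[OF t, of m 0] t
    by (simp add: power2_eq_square)
  finally show "(\<integral>b. normal_density m t b * (d - b)^2 \<partial>lborel) = t^2 + (d - m)^2" .
qed

lemma exp_identity:
  fixes S b y :: real assumes S: "S > 0"
  shows "-(b^2)/(2*S) + -((y-b)^2)/2 = -(y^2)/(2*(1+S)) + -((b - S/(1+S)*y)^2)/(2*(S/(1+S)))"
proof -
  have Q: "1 + S > 0" using S by simp
  have r: "(b - S/(1+S)*y) = ((1+S)*b - S*y)/(1+S)" using Q by (simp add: field_simps)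
  show ?thesis unfolding r using S Q
    apply (simp add: power_divide divide_simps)
    apply (simp add: power2_eq_square algebra_simps)
    done
qed

lemma normal_product_identity:
  fixes sg b y :: real assumes sg: "sg > 0"
  defines "v \<equiv> sg^2 / (1 + sg^2)"
  shows "normal_density 0 sg b * normal_density b 1 y
       = normal_density 0 (sqrt (1 + sg^2)) y * normal_density (v * y) (sqrt v) b"
proof -
  have q: "1 + sg^2 > 0" by (simp add: add_pos_nonneg)
  have v: "v > 0" using sg q by (simp add: v_def)
  have c: "sqrt (2 * pi * sg\<^sup>2) * sqrt (2 * pi * 1\<^sup>2) = sqrt (2 * pi * (sqrt (1 + sg^2))\<^sup>2) * sqrt (2 * pi * (sqrt v)\<^sup>2)"
  proof -
    have "sqrt (2 * pi * sg\<^sup>2) * sqrt (2 * pi * 1\<^sup>2) = sqrt ((2 * pi * sg\<^sup>2) * (2 * pi))"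
      by (simp add: real_sqrt_mult)
    also have "(2 * pi * sg\<^sup>2) * (2 * pi) = (2 * pi * (1 + sg^2)) * (2 * pi * v)"
      using q by (simp add: v_def field_simps)
    also have "sqrt \<dots> = sqrt (2 * pi * (sqrt (1 + sg^2))\<^sup>2) * sqrt (2 * pi * (sqrt v)\<^sup>2)"
      using q v by (simp add: real_sqrt_mult)
    finally show ?thesis .
  qed
  have ex: "-((b - 0)\<^sup>2) / (2 * sg\<^sup>2) + -((y - b)\<^sup>2) / (2 * 1\<^sup>2)
     = -((y - 0)\<^sup>2) / (2 * (sqrt (1 + sg^2))\<^sup>2) + -((b - v * y)\<^sup>2) / (2 * (sqrt v)\<^sup>2)"
  proof -
    have "(sqrt (1 + sg^2))\<^sup>2 = 1 + sg^2" "(sqrt v)\<^sup>2 = v" using q v by simp_all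
    then show ?thesis using exp_identity[of "sg^2" b y] sg by (simp add: v_def)
  qed
  show ?thesis
    unfolding normal_density_def
    using c ex by (simp add: exp_add[symmetric] field_simps)
qed

lemma nd_measurable[measurable]:
  assumes [measurable]: "f \<in> borel_measurable M" "g \<in> borel_measurable M"
  shows "(\<lambda>x. normal_density (f x) s (g x)) \<in> borel_measurable M"
  unfolding normal_density_def by measurable

lemma nn_integral_nd: "s > 0 \<Longrightarrow> (\<integral>\<^sup>+t. ennreal (normal_density m s t) \<partial>lborel) = 1"
  using prob_space.emeasure_space_1[OF prob_space_normal_density[of s m]]
  by (simp add: emeasure_density)

lemma bayes1d:
  fixes sg y d :: real assumes sg: "sg > 0"
  shows "(\<integral>\<^sup>+b. ennreal (normal_density 0 sg b * normal_density b 1 y * (d - b)^2) \<partial>lborel)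
     \<ge> ennreal (normal_density 0 (sqrt (1 + sg^2)) y * (sg^2 / (1 + sg^2)))"
proof -
  define v where "v = sg^2 / (1 + sg^2)"
  have q: "1 + sg^2 > 0" by (simp add: add_pos_nonneg)
  have v: "v > 0" using sg q by (simp add: v_def)
  define c where "c = normal_density 0 (sqrt (1 + sg^2)) y"
  have c0: "c \<ge> 0" by (simp add: c_def)
  have e: "normal_density 0 sg b * normal_density b 1 y * (d - b)^2 = c * (normal_density (v * y) (sqrt v) b * (d - b)^2)" for b
    using normal_product_identity[OF sg, of b y] by (simp add: c_def v_def)
  have sv: "sqrt v > 0" using v by simp
  have "(\<integral>\<^sup>+b. ennreal (normal_density 0 sg b * normal_density b 1 y * (d - b)^2) \<partial>lborel)
      = (\<integral>\<^sup>+b. ennreal (c * (normal_density (v * y) (sqrt v) b * (d - b)^2)) \<partial>lborel)"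
    by (simp add: e)
  also have "\<dots> = ennreal (\<integral>b. c * (normal_density (v * y) (sqrt v) b * (d - b)^2) \<partial>lborel)"
    by (rule nn_integral_eq_integral) (use normal_second(1)[OF sv] c0 in auto)
  also have "(\<integral>b. c * (normal_density (v * y) (sqrt v) b * (d - b)^2) \<partial>lborel) = c * (v + (d - v * y)^2)"
    using normal_second(2)[OF sv, of "v * y" d] v by simp
  also have "ennreal (c * (v + (d - v * y)^2)) \<ge> ennreal (c * v)"
    using c0 by (intro ennreal_leI mult_left_mono) auto
  finally show ?thesis by (simp add: c_def v_def)
qed

lemma bayes_coord:
  fixes I :: "'i set" and i :: 'i and di :: "('i \<Rightarrow> real) \<Rightarrow> real" and sg :: real
  assumes fin: "finite I" and i: "i \<in> I" and sg: "sg > 0"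
    and di[measurable]: "di \<in> borel_measurable (PiM I (\<lambda>_. lborel))"
  shows "(\<integral>\<^sup>+\<beta>. \<integral>\<^sup>+x. ennreal ((\<Prod>j\<in>I. normal_density 0 sg (\<beta> j)) * (\<Prod>j\<in>I. normal_density (\<beta> j) 1 (x j)) * (di x - \<beta> i)^2)
      \<partial>PiM I (\<lambda>_. lborel) \<partial>PiM I (\<lambda>_. lborel)) \<ge> ennreal (sg^2 / (1 + sg^2))"
proof -
  interpret L: product_sigma_finite "\<lambda>_::'i. lborel :: real measure"
    unfolding product_sigma_finite_def by (intro allI) (rule lborel.sigma_finite_measure_axioms)
  define v where "v = sg^2 / (1 + sg^2)"
  have q: "1 + sg^2 > 0" by (simp add: add_pos_nonneg)
  have v: "v > 0" using sg q by (simp add: v_def)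
  have iI[simp]: "i \<in> I" by (rule i)
  define I' where "I' = I - {i}"
  have I: "I = insert i I'" "i \<notin> I'" "finite I'" using i fin by (auto simp: I'_def)
  define H where "H \<beta> = (\<integral>\<^sup>+x. ennreal ((\<Prod>j\<in>I. normal_density 0 sg (\<beta> j)) * (\<Prod>j\<in>I. normal_density (\<beta> j) 1 (x j)) * (di x - \<beta> i)^2) \<partial>PiM I (\<lambda>_. lborel))" for \<beta>
  have sfI: "sigma_finite_measure (PiM I (\<lambda>_. lborel :: real measure))" by (rule L.sigma_finite[OF fin])
  have Hm: "H \<in> borel_measurable (PiM I (\<lambda>_. lborel))"
    unfolding H_def
    by (rule sigma_finite_measure.borel_measurable_nn_integral[OF sfI]) measurable
  define A where "A \<beta>' = (\<Prod>j\<in>I'. normal_density 0 sg (\<beta>' j))" for \<beta>'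
  define B where "B \<beta>' x = (\<Prod>j\<in>I'. normal_density (\<beta>' j) 1 (x j))" for \<beta>' x
  have A0: "A \<beta>' \<ge> 0" for \<beta>' by (simp add: A_def prod_nonneg)
  have B0: "B \<beta>' x \<ge> 0" for \<beta>' x by (simp add: B_def prod_nonneg)
  have pt: "(\<integral>\<^sup>+b. H (\<beta>'(i := b)) \<partial>lborel) \<ge> ennreal (A \<beta>' * v)" for \<beta>'
  proof -
    define K where "K x b = ennreal (A \<beta>' * B \<beta>' x * (normal_density 0 sg b * normal_density b 1 (x i) * (di x - b)^2))" for x b
    have HK: "H (\<beta>'(i := b)) = (\<integral>\<^sup>+x. K x b \<partial>PiM I (\<lambda>_. lborel))" for b
    proof -
      have p1: "(\<Prod>j\<in>I. normal_density 0 sg ((\<beta>'(i := b)) j)) = normal_density 0 sg b * A \<beta>'"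
      proof -
        have h: "(\<Prod>j\<in>I'. normal_density 0 sg ((\<beta>'(i := b)) j)) = A \<beta>'"
          unfolding A_def using I(2) by (intro prod.cong) auto
        show ?thesis unfolding I(1) prod.insert[OF I(3,2)] h by simp
      qed
      have p2: "(\<Prod>j\<in>I. normal_density ((\<beta>'(i := b)) j) 1 (x j)) = normal_density b 1 (x i) * B \<beta>' x" for x
      proof -
        have h: "(\<Prod>j\<in>I'. normal_density ((\<beta>'(i := b)) j) 1 (x j)) = B \<beta>' x"
          unfolding B_def using I(2) by (intro prod.cong) auto
        show ?thesis unfolding I(1) prod.insert[OF I(3,2)] h by simp
      qed
      show ?thesis unfolding H_def K_def p1 p2
        by (intro nn_integral_cong) (simp add: ac_simps)
    qed
    have ps: "pair_sigma_finite (PiM I (\<lambda>_. lborel :: real measure)) (lborel :: real measure)"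
      unfolding pair_sigma_finite_def using sfI lborel.sigma_finite_measure_axioms by blast
    have Bm[measurable]: "B \<beta>' \<in> borel_measurable (PiM I (\<lambda>_. lborel))"
      unfolding B_def
    proof (rule borel_measurable_prod)
      fix j assume "j \<in> I'"
      then have [simp]: "j \<in> I" using I by auto
      show "(\<lambda>x. normal_density (\<beta>' j) 1 (x j)) \<in> borel_measurable (PiM I (\<lambda>_. lborel))"
        by measurable
    qed
    have Km: "case_prod K \<in> borel_measurable (PiM I (\<lambda>_. lborel) \<Otimes>\<^sub>M lborel)"
      unfolding K_def by measurable
    have "(\<integral>\<^sup>+b. H (\<beta>'(i := b)) \<partial>lborel) = (\<integral>\<^sup>+b. \<integral>\<^sup>+x. K x b \<partial>PiM I (\<lambda>_. lborel) \<partial>lborel)"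
      by (simp add: HK)
    also have "\<dots> = (\<integral>\<^sup>+x. \<integral>\<^sup>+b. K x b \<partial>lborel \<partial>PiM I (\<lambda>_. lborel))"
      by (rule pair_sigma_finite.Fubini'[OF ps Km])
    also have "\<dots> \<ge> (\<integral>\<^sup>+x. ennreal (A \<beta>' * B \<beta>' x) * ennreal (normal_density 0 (sqrt (1 + sg^2)) (x i) * v) \<partial>PiM I (\<lambda>_. lborel))"
    proof (intro nn_integral_mono)
      fix x
      have "(\<integral>\<^sup>+b. K x b \<partial>lborel) = (\<integral>\<^sup>+b. ennreal (A \<beta>' * B \<beta>' x) * ennreal (normal_density 0 sg b * normal_density b 1 (x i) * (di x - b)^2) \<partial>lborel)"
        unfolding K_def using A0 B0 by (intro nn_integral_cong) (simp add: ennreal_mult[symmetric] mult.assoc)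
      also have "\<dots> = ennreal (A \<beta>' * B \<beta>' x) * (\<integral>\<^sup>+b. ennreal (normal_density 0 sg b * normal_density b 1 (x i) * (di x - b)^2) \<partial>lborel)"
        by (rule nn_integral_cmult) measurable
      also have "\<dots> \<ge> ennreal (A \<beta>' * B \<beta>' x) * ennreal (normal_density 0 (sqrt (1 + sg^2)) (x i) * v)"
        using bayes1d[OF sg, of "x i" "di x"] unfolding v_def by (intro mult_left_mono) auto
      finally show "ennreal (A \<beta>' * B \<beta>' x) * ennreal (normal_density 0 (sqrt (1 + sg^2)) (x i) * v) \<le> (\<integral>\<^sup>+b. K x b \<partial>lborel)" .
    qed
    also have "(\<integral>\<^sup>+x. ennreal (A \<beta>' * B \<beta>' x) * ennreal (normal_density 0 (sqrt (1 + sg^2)) (x i) * v) \<partial>PiM I (\<lambda>_. lborel))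
        = ennreal (A \<beta>' * v) * (\<integral>\<^sup>+x. (\<Prod>j\<in>I. ennreal (if j = i then normal_density 0 (sqrt (1 + sg^2)) (x j) else normal_density (\<beta>' j) 1 (x j))) \<partial>PiM I (\<lambda>_. lborel))"
    proof -
      have "(\<Prod>j\<in>I. ennreal (if j = i then normal_density 0 (sqrt (1 + sg^2)) (x j) else normal_density (\<beta>' j) 1 (x j)))
          = ennreal (normal_density 0 (sqrt (1 + sg^2)) (x i) * B \<beta>' x)" for x
      proof -
        have "(\<Prod>j\<in>I. ennreal (if j = i then normal_density 0 (sqrt (1 + sg^2)) (x j) else normal_density (\<beta>' j) 1 (x j)))
          = ennreal (\<Prod>j\<in>I. (if j = i then normal_density 0 (sqrt (1 + sg^2)) (x j) else normal_density (\<beta>' j) 1 (x j)))"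
          by (rule prod_ennreal) simp
        also have "(\<Prod>j\<in>I. (if j = i then normal_density 0 (sqrt (1 + sg^2)) (x j) else normal_density (\<beta>' j) 1 (x j)))
            = normal_density 0 (sqrt (1 + sg^2)) (x i) * B \<beta>' x"
        proof -
          have h: "(\<Prod>j\<in>I'. (if j = i then normal_density 0 (sqrt (1 + sg^2)) (x j) else normal_density (\<beta>' j) 1 (x j))) = B \<beta>' x"
            unfolding B_def using I(2) by (intro prod.cong) auto
          show ?thesis unfolding I(1) prod.insert[OF I(3,2)] h by simp
        qed
        finally show ?thesis .
      qed
      then have "(\<integral>\<^sup>+x. ennreal (A \<beta>' * v) * (\<Prod>j\<in>I. ennreal (if j = i then normal_density 0 (sqrt (1 + sg^2)) (x j) else normal_density (\<beta>' j) 1 (x j))) \<partial>PiM I (\<lambda>_. lborel))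
         = (\<integral>\<^sup>+x. ennreal (A \<beta>' * B \<beta>' x) * ennreal (normal_density 0 (sqrt (1 + sg^2)) (x i) * v) \<partial>PiM I (\<lambda>_. lborel))"
        using A0 B0 v by (intro nn_integral_cong) (simp add: ennreal_mult[symmetric] ac_simps)
      moreover have "(\<integral>\<^sup>+x. ennreal (A \<beta>' * v) * (\<Prod>j\<in>I. ennreal (if j = i then normal_density 0 (sqrt (1 + sg^2)) (x j) else normal_density (\<beta>' j) 1 (x j))) \<partial>PiM I (\<lambda>_. lborel))
         = ennreal (A \<beta>' * v) * (\<integral>\<^sup>+x. (\<Prod>j\<in>I. ennreal (if j = i then normal_density 0 (sqrt (1 + sg^2)) (x j) else normal_density (\<beta>' j) 1 (x j))) \<partial>PiM I (\<lambda>_. lborel))"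
        by (rule nn_integral_cmult) measurable
      ultimately show ?thesis by simp
    qed
    also have "(\<integral>\<^sup>+x. (\<Prod>j\<in>I. ennreal (if j = i then normal_density 0 (sqrt (1 + sg^2)) (x j) else normal_density (\<beta>' j) 1 (x j))) \<partial>PiM I (\<lambda>_. lborel)) = 1"
    proof -
      have "(\<integral>\<^sup>+x. (\<Prod>j\<in>I. ennreal (if j = i then normal_density 0 (sqrt (1 + sg^2)) (x j) else normal_density (\<beta>' j) 1 (x j))) \<partial>PiM I (\<lambda>_. lborel))
          = (\<Prod>j\<in>I. \<integral>\<^sup>+t. ennreal (if j = i then normal_density 0 (sqrt (1 + sg^2)) t else normal_density (\<beta>' j) 1 t) \<partial>lborel)"
        by (rule L.product_nn_integral_prod[OF fin, where f="\<lambda>j t. ennreal (if j = i then normal_density 0 (sqrt (1 + sg^2)) t else normal_density (\<beta>' j) 1 t)"]) measurable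
      also have "\<dots> = (\<Prod>j\<in>I. 1)"
      proof (intro prod.cong refl)
        fix j assume "j \<in> I"
        have sq: "sqrt (1 + sg^2) > 0" using q by simp
        show "(\<integral>\<^sup>+t. ennreal (if j = i then normal_density 0 (sqrt (1 + sg^2)) t else normal_density (\<beta>' j) 1 t) \<partial>lborel) = 1"
          using nn_integral_nd[OF sq, of 0] by (cases "j = i") (simp_all add: nn_integral_nd)
      qed
      finally show ?thesis by simp
    qed
    finally show ?thesis by (simp only: mult_1_right)
  qed
  have "(\<integral>\<^sup>+\<beta>. H \<beta> \<partial>PiM I (\<lambda>_. lborel)) = (\<integral>\<^sup>+\<beta>'. \<integral>\<^sup>+b. H (\<beta>'(i := b)) \<partial>lborel \<partial>PiM I' (\<lambda>_. lborel))"
    unfolding I(1) by (rule L.product_nn_integral_insert[OF I(3,2)]) (use Hm I(1) in simp)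
  also have "\<dots> \<ge> (\<integral>\<^sup>+\<beta>'. ennreal (A \<beta>' * v) \<partial>PiM I' (\<lambda>_. lborel))"
    by (intro nn_integral_mono pt)
  also have "(\<integral>\<^sup>+\<beta>'. ennreal (A \<beta>' * v) \<partial>PiM I' (\<lambda>_. lborel)) = ennreal v * (\<integral>\<^sup>+\<beta>'. (\<Prod>j\<in>I'. ennreal (normal_density 0 sg (\<beta>' j))) \<partial>PiM I' (\<lambda>_. lborel))"
  proof -
    have "(\<integral>\<^sup>+\<beta>'. ennreal (A \<beta>' * v) \<partial>PiM I' (\<lambda>_. lborel)) = (\<integral>\<^sup>+\<beta>'. ennreal v * (\<Prod>j\<in>I'. ennreal (normal_density 0 sg (\<beta>' j))) \<partial>PiM I' (\<lambda>_. lborel))"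
      using v A0 by (intro nn_integral_cong) (simp add: A_def ennreal_mult prod_ennreal mult.commute)
    also have "\<dots> = ennreal v * (\<integral>\<^sup>+\<beta>'. (\<Prod>j\<in>I'. ennreal (normal_density 0 sg (\<beta>' j))) \<partial>PiM I' (\<lambda>_. lborel))"
      by (rule nn_integral_cmult) measurable
    finally show ?thesis .
  qed
  also have "(\<integral>\<^sup>+\<beta>'. (\<Prod>j\<in>I'. ennreal (normal_density 0 sg (\<beta>' j))) \<partial>PiM I' (\<lambda>_. lborel)) = 1"
    using L.product_nn_integral_prod[OF I(3), where f="\<lambda>j t. ennreal (normal_density 0 sg t)"] sg
    by (simp add: nn_integral_nd)
  finally show ?thesis by (simp add: H_def v_def)
qed

lemma estimator_meas:
  assumes "estimator p delta" "i < p"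
  shows "(\<lambda>x. delta x i) \<in> borel_measurable (PiM {..<p} (\<lambda>_. lborel))"
proof -
  have A: "(\<lambda>x. delta x i) \<in> borel_measurable (PiM {..<p} (\<lambda>_. borel))"
    using assms by (simp add: estimator_def)
  have S: "sets (PiM {..<p} (\<lambda>_. lborel :: real measure)) = sets (PiM {..<p} (\<lambda>_. borel :: real measure))"
    by (rule sets_PiM_cong) simp_all
  show ?thesis using A unfolding measurable_cong_sets[OF S refl] .
qed

lemma bayes_total:
  fixes p :: nat and delta :: "(nat \<Rightarrow> real) \<Rightarrow> nat \<Rightarrow> real" and sg :: real
  assumes est: "estimator p delta" and sg: "sg > 0"
  shows "(\<integral>\<^sup>+\<beta>. risk p delta \<beta> \<partial>PiM {..<p} (\<lambda>_. density lborel (normal_density 0 sg)))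
      \<ge> ennreal (real p * (sg^2 / (1 + sg^2)))"
proof -
  define I where "I = {..<p}"
  have fin: "finite I" by (simp add: I_def)
  let ?L = "PiM I (\<lambda>_. lborel :: real measure)"
  interpret L: product_sigma_finite "\<lambda>_::nat. lborel :: real measure"
    unfolding product_sigma_finite_def by (intro allI) (rule lborel.sigma_finite_measure_axioms)
  have sfI: "sigma_finite_measure ?L" by (rule L.sigma_finite[OF fin])
  have dm[measurable]: "(\<lambda>x. delta x i) \<in> borel_measurable ?L" if "i \<in> I" for i
    using estimator_meas[OF est] that by (simp add: I_def)
  have summ: "(\<lambda>x. \<Sum>i\<in>I. (delta x i - \<beta> i)^2) \<in> borel_measurable ?L" for \<beta>
  proof (rule borel_measurable_sum)
    fix i assume i: "i \<in> I"
    note dm[OF i, measurable]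
    show "(\<lambda>x. (delta x i - \<beta> i)^2) \<in> borel_measurable ?L" by measurable
  qed
  have summ2: "(\<lambda>(\<beta>, x). \<Sum>i\<in>I. (delta x i - \<beta> i)^2) \<in> borel_measurable (?L \<Otimes>\<^sub>M ?L)"
  proof -
    have "(\<lambda>z. \<Sum>i\<in>I. (delta (snd z) i - (fst z) i)^2) \<in> borel_measurable (?L \<Otimes>\<^sub>M ?L)"
    proof (rule borel_measurable_sum)
      fix i assume i: "i \<in> I"
      note dm[OF i, measurable]
      have [simp]: "i \<in> I" by (rule i)
      show "(\<lambda>z. (delta (snd z) i - (fst z) i)^2) \<in> borel_measurable (?L \<Otimes>\<^sub>M ?L)" by measurable
    qed
    then show ?thesis by (simp add: case_prod_beta')
  qed
  define Psi where "Psi \<beta> = (\<Prod>j\<in>I. normal_density 0 sg (\<beta> j))" for \<beta> :: "nat \<Rightarrow> real"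
  define Phi where "Phi \<beta> x = (\<Prod>j\<in>I. normal_density (\<beta> j) 1 (x j))" for \<beta> x :: "nat \<Rightarrow> real"
  have Psi0: "Psi \<beta> \<ge> 0" for \<beta> by (simp add: Psi_def prod_nonneg)
  have Phi0: "Phi \<beta> x \<ge> 0" for \<beta> x by (simp add: Phi_def prod_nonneg)
  define R where "R i \<beta> = (\<integral>\<^sup>+x. ennreal (Psi \<beta> * Phi \<beta> x * (delta x i - \<beta> i)^2) \<partial>?L)" for i \<beta>
  have Rm: "R i \<in> borel_measurable ?L" if "i \<in> I" for i
    unfolding R_def Psi_def Phi_def
    by (rule sigma_finite_measure.borel_measurable_nn_integral[OF sfI]) (use that in measurable)
  have risk_r: "risk p delta \<beta> = (\<integral>\<^sup>+x. ennreal (Phi \<beta> x * (\<Sum>i\<in>I. (delta x i - \<beta> i)^2)) \<partial>?L)" for \<beta>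
  proof -
    have "risk p delta \<beta> = (\<integral>\<^sup>+x. ennreal (\<Sum>i\<in>I. (delta x i - \<beta> i)^2) \<partial>density ?L (\<lambda>x. \<Prod>j\<in>I. ennreal (normal_density (\<beta> j) 1 (x j))))"
      unfolding risk_def normal_vec_def I_def
      by (subst PiM_density_normal) auto
    also have "\<dots> = (\<integral>\<^sup>+x. (\<Prod>j\<in>I. ennreal (normal_density (\<beta> j) 1 (x j))) * ennreal (\<Sum>i\<in>I. (delta x i - \<beta> i)^2) \<partial>?L)"
      by (rule nn_integral_density) (measurable, use summ in measurable)
    also have "\<dots> = (\<integral>\<^sup>+x. ennreal (Phi \<beta> x * (\<Sum>i\<in>I. (delta x i - \<beta> i)^2)) \<partial>?L)"
      by (intro nn_integral_cong) (simp add: Phi_def prod_ennreal ennreal_mult prod_nonneg sum_nonneg)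
    finally show ?thesis .
  qed
  have risk_m: "(\<lambda>\<beta>. risk p delta \<beta>) \<in> borel_measurable ?L"
    unfolding risk_r Phi_def
    by (rule sigma_finite_measure.borel_measurable_nn_integral[OF sfI]) (use summ2 in measurable)
  have risk_eq: "ennreal (Psi \<beta>) * risk p delta \<beta> = (\<Sum>i\<in>I. R i \<beta>)" for \<beta>
  proof -
    note r = risk_r[of \<beta>]
    have "ennreal (Psi \<beta>) * risk p delta \<beta> = (\<integral>\<^sup>+x. ennreal (Psi \<beta>) * ennreal (Phi \<beta> x * (\<Sum>i\<in>I. (delta x i - \<beta> i)^2)) \<partial>?L)"
      unfolding r by (rule nn_integral_cmult[symmetric]) (unfold Phi_def, use summ in measurable)
    also have "\<dots> = (\<integral>\<^sup>+x. (\<Sum>i\<in>I. ennreal (Psi \<beta> * Phi \<beta> x * (delta x i - \<beta> i)^2)) \<partial>?L)"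
    proof (intro nn_integral_cong)
      fix x
      have "ennreal (Psi \<beta>) * ennreal (Phi \<beta> x * (\<Sum>i\<in>I. (delta x i - \<beta> i)^2)) = ennreal (\<Sum>i\<in>I. Psi \<beta> * Phi \<beta> x * (delta x i - \<beta> i)^2)"
      proof -
        have X0: "0 \<le> Phi \<beta> x * (\<Sum>i\<in>I. (delta x i - \<beta> i)^2)" using Phi0 by (simp add: sum_nonneg)
        show ?thesis unfolding ennreal_mult[OF Psi0 X0, symmetric]
          by (simp add: sum_distrib_left mult.assoc)
      qed
      also have "\<dots> = (\<Sum>i\<in>I. ennreal (Psi \<beta> * Phi \<beta> x * (delta x i - \<beta> i)^2))"
        using Psi0 Phi0 by (intro sum_ennreal[symmetric]) auto
      finally show "ennreal (Psi \<beta>) * ennreal (Phi \<beta> x * (\<Sum>i\<in>I. (delta x i - \<beta> i)^2)) = (\<Sum>i\<in>I. ennreal (Psi \<beta> * Phi \<beta> x * (delta x i - \<beta> i)^2))" .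
    qed
    also have "\<dots> = (\<Sum>i\<in>I. R i \<beta>)"
      unfolding R_def by (rule nn_integral_sum) (unfold Psi_def Phi_def, use dm in measurable)
    finally show ?thesis .
  qed
  have "(\<integral>\<^sup>+\<beta>. risk p delta \<beta> \<partial>PiM {..<p} (\<lambda>_. density lborel (normal_density 0 sg)))
      = (\<integral>\<^sup>+\<beta>. risk p delta \<beta> \<partial>density ?L (\<lambda>\<beta>. \<Prod>j\<in>I. ennreal (normal_density 0 sg (\<beta> j))))"
    using PiM_density_normal[OF fin sg, of "\<lambda>_. 0"] by (simp add: I_def)
  also have "\<dots> = (\<integral>\<^sup>+\<beta>. (\<Prod>j\<in>I. ennreal (normal_density 0 sg (\<beta> j))) * risk p delta \<beta> \<partial>?L)"
    by (rule nn_integral_density) (measurable, use risk_m in measurable)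
  also have "\<dots> = (\<integral>\<^sup>+\<beta>. (\<Sum>i\<in>I. R i \<beta>) \<partial>?L)"
    by (intro nn_integral_cong) (simp add: risk_eq[symmetric] Psi_def prod_ennreal)
  also have "\<dots> = (\<Sum>i\<in>I. \<integral>\<^sup>+\<beta>. R i \<beta> \<partial>?L)"
    by (rule nn_integral_sum) (use Rm in auto)
  also have "\<dots> \<ge> (\<Sum>i\<in>I. ennreal (sg^2 / (1 + sg^2)))"
  proof (intro sum_mono)
    fix i assume i: "i \<in> I"
    show "ennreal (sg^2 / (1 + sg^2)) \<le> (\<integral>\<^sup>+\<beta>. R i \<beta> \<partial>?L)"
      unfolding R_def Psi_def Phi_def by (rule bayes_coord[OF fin i sg dm[OF i]])
  qed
  also have "(\<Sum>i\<in>I. ennreal (sg^2 / (1 + sg^2))) = ennreal (real p * (sg^2 / (1 + sg^2)))"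
  proof -
    have "(\<Sum>i\<in>I. ennreal (sg^2 / (1 + sg^2))) = ennreal (\<Sum>i\<in>I. sg^2 / (1 + sg^2))"
      by (rule sum_ennreal) (simp add: add_pos_nonneg)
    then show ?thesis by (simp add: I_def)
  qed
  finally show ?thesis .
qed

lemma lower_sup:
  assumes est: "estimator p delta"
  shows "ennreal (real p) \<le> (SUP beta. risk p delta beta)"
proof -
  define M where "M = (SUP beta. risk p delta beta)"
  have bnd: "ennreal (real p * (sg^2 / (1 + sg^2))) \<le> M" if sg: "sg > 0" for sg
  proof -
    let ?P = "PiM {..<p} (\<lambda>_. density lborel (normal_density 0 sg))"
    interpret P: prob_space ?P
      by (rule prob_space_PiM) (rule prob_space_normal_density[OF sg])
    have "ennreal (real p * (sg^2 / (1 + sg^2))) \<le> (\<integral>\<^sup>+\<beta>. risk p delta \<beta> \<partial>?P)"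
      by (rule bayes_total[OF est sg])
    also have "\<dots> \<le> (\<integral>\<^sup>+\<beta>. M \<partial>?P)"
      by (intro nn_integral_mono) (auto simp: M_def intro: SUP_upper)
    also have "\<dots> = M" by (simp add: P.emeasure_space_1)
    finally show ?thesis .
  qed
  show ?thesis
  proof (rule ccontr)
    assume "\<not> ennreal (real p) \<le> (SUP beta. risk p delta beta)"
    then have Mlt: "M < ennreal (real p)" by (simp add: M_def not_le)
    then have "M \<noteq> top" by auto
    then obtain r where r: "M = ennreal r" "r \<ge> 0" by (cases M rule: ennreal_cases) auto
    have rp: "r < real p" using Mlt r by (simp add: ennreal_less_iff)
    define a where "a = real p / (real p - r)"
    have a0: "a > 0" using rp r by (simp add: a_def)
    define sg where "sg = sqrt a"
    have sg0: "sg > 0" using a0 by (simp add: sg_def)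
    have sg2: "sg^2 = a" using a0 by (simp add: sg_def)
    have "real p * (sg^2 / (1 + sg^2)) = real p ^ 2 / (2 * real p - r)"
    proof -
      have d: "real p - r > 0" "2 * real p - r > 0" using rp r by auto
      have e1: "1 + a = ((real p - r) + real p) / (real p - r)"
        unfolding a_def using d by (simp add: field_simps)
      have "a / (1 + a) = real p / ((real p - r) + real p)"
        unfolding e1 unfolding a_def using d by simp
      then have "a / (1 + a) = real p / (2 * real p - r)" by simp
      then show ?thesis unfolding sg2 by (simp add: power2_eq_square)
    qed
    also have "\<dots> > r"
    proof -
      have "(real p - r)^2 > 0" using rp by simp
      then have "r * (2 * real p - r) < real p ^ 2" by (simp add: power2_eq_square algebra_simps)
      moreover have "2 * real p - r > 0" using rp r by simp
      ultimately show ?thesis by (simp add: pos_less_divide_eq)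
    qed
    finally have "ennreal r < ennreal (real p * (sg^2 / (1 + sg^2)))"
      using r by (simp add: ennreal_less_iff)
    also have "\<dots> \<le> M" by (rule bnd[OF sg0])
    finally show False using r by simp
  qed
qed

lemma bhat_estimator: "estimator p (\<lambda>x i. (1 - (real p + 2) / sqnorm p x) * x i)"
  unfolding estimator_def sqnorm_def by (auto intro!: measurable_compose)

theorem mainTheorem7:
  fixes p :: nat and y :: "nat \<Rightarrow> real"
  assumes "p \<ge> 1"
    and "sqnorm p y > real p + 2"
  shows "(let s = sqnorm p y; k = (real p + 2) / s; tau2 = (1 - k) / k
          in em_map p s tau2 = tau2)
     \<and> (p \<ge> 6 \<longrightarrow>
          (let bhat = (\<lambda>x i. (1 - (real p + 2) / sqnorm p x) * x i)
           in minimax p bhat \<and> (\<forall>beta. risk p bhat beta \<le> risk p (\<lambda>x. x) beta)))"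
proof (intro conjI impI)
  show "let s = sqnorm p y; k = (real p + 2) / s; tau2 = (1 - k) / k in em_map p s tau2 = tau2"
    using partA[OF assms(2)] by (simp add: Let_def)
  assume p6: "p \<ge> 6"
  let ?b = "\<lambda>x i. (1 - (real p + 2) / sqnorm p x) * x i"
  have rb: "risk p ?b beta \<le> ennreal (real p)" for beta by (rule risk_bhat[OF p6])
  have "minimax p ?b"
    unfolding minimax_def
  proof (intro conjI allI impI)
    show "estimator p ?b" by (rule bhat_estimator)
    fix delta' assume "estimator p delta'"
    have "(SUP beta. risk p ?b beta) \<le> ennreal (real p)" by (rule SUP_least) (rule rb)
    also have "\<dots> \<le> (SUP beta. risk p delta' beta)" by (rule lower_sup) fact
    finally show "(SUP beta. risk p ?b beta) \<le> (SUP beta. risk p delta' beta)" .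
  qed
  moreover have "\<forall>beta. risk p ?b beta \<le> risk p (\<lambda>x. x) beta"
    using rb risk_identity by simp
  ultimately show "let bhat = ?b in minimax p bhat \<and> (\<forall>beta. risk p bhat beta \<le> risk p (\<lambda>x. x) beta)"
    by (simp add: Let_def)
qed

end
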